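(* Let $X$ be a Banach space with dual $X^{\ast}$ and $X_d$ a sequence space as described in the context. Let $\{x_n\}\subset X$ be a co-frame and $\{y_n\}\subset X^{\ast}$ a frame. Then $\{y_n\}$ is equivalent to some alternate dual frame for $\{x_n\}$ if and only if the operator $$Vy=\sum_{n=1}^\infty (x_n,y)\,y_n$$ is invertible as an operator from $X^{\ast}$ to $X^{\ast}$.
   Context: $X$ is a Banach space, $X^{\ast}$ its dual, and $(x,y)$ denotes the value of $y\in X^{\ast}$ at $x\in X$. $X_d$ is a Banach space of scalar sequences $a=\{a_n\}$ in which the unit vectors $\varepsilon_n=\{\delta_{nj}\}_j$ form a basis; its dual $X_d^{\ast}$ is identified with a space of sequences via $b\mapsto\{b(\varepsilon_n)\}$, and it is assumed that the coordinate functionals $\{\varepsilon_n^{\ast}\}$ form a basis of $X_d^{\ast}$. A sequence $\{y_n\}\subset X^{\ast}$ is a frame if there are $A,B>0$ such that $\{(x,y_n)\}\in X_d$ and $A\|x\|_X\le \|\{(x,y_n)\}\|_{X_d}\le B\|x\|_X$ for all $x\in X$. A sequence $\{x_n\}\subset X$ is a co-frame if $\{(x_n,y)\}\in X_d^{\ast}$ for all $y\in X^{\ast}$ and there are $\tilde A,\tilde B>0$ with $\tilde A\|y\|_{X^{\ast}}\le \|\{(x_n,y)\}\|_{X_d^{\ast}}\le \tilde B\|y\|_{X^{\ast}}$ for all $y\in X^{\ast}$. A co-frame $\{x_n\}$ and a frame $\{y_n\}$ form a cross-frame if $x=\sum_n (x,y_n)x_n$ for all $x\in X$ and $y=\sum_n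 (x_n,y)y_n$ for all $y\in X^{\ast}$. A sequence $\{w_n\}\subset X^{\ast}$ is an alternate dual frame for the co-frame $\{x_n\}$ if $\{x_n\}$ and $\{w_n\}$ form a cross-frame. Two sequences $\{y_n\},\{w_n\}\subset X^{\ast}$ are equivalent if there is an invertible bounded linear operator $T:X^{\ast}\to X^{\ast}$ with $Ty_n=w_n$ for all $n$. *)

theory Defs
  imports "HOL-Analysis.Analysis"
begin

(* Scalars are real.  X is a type 'a :: banach, X* is 'a \<Rightarrow>\<^sub>L real,
   and the pairing (x,y) is blinfun_apply y x.
   The sequence space X_d is a set D of real sequences with a norm nd. *)

definition unitv :: "nat \<Rightarrow> nat \<Rightarrow> real" where
  "unitv n = (\<lambda>j. if j = n then 1 else 0)"

definition psum :: "(nat \<Rightarrow> real) \<Rightarrow> nat \<Rightarrow> nat \<Rightarrow> real" where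
  "psum c N = (\<lambda>j. \<Sum>n<N. c n * unitv n j)"

definition seq_space :: "(nat \<Rightarrow> real) set \<Rightarrow> ((nat \<Rightarrow> real) \<Rightarrow> real) \<Rightarrow> bool" where
  "seq_space D nd \<longleftrightarrow>
     (\<lambda>j. 0) \<in> D \<and>
     (\<forall>a\<in>D. \<forall>b\<in>D. (\<lambda>j. a j + b j) \<in> D) \<and>
     (\<forall>c. \<forall>a\<in>D. (\<lambda>j. c * a j) \<in> D) \<and>
     (\<forall>a\<in>D. 0 \<le> nd a) \<and>
     (\<forall>a\<in>D. nd a = 0 \<longleftrightarrow> a = (\<lambda>j. 0)) \<and>
     (\<forall>c. \<forall>a\<in>D. nd (\<lambda>j. c * a j) = \<bar>c\<bar> * nd a) \<and>
     (\<forall>a\<in>D. \<forall>b\<in>D. nd (\<lambda>j. a j + b j) \<le> nd a + nd b) \<and>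
     (\<forall>f. (\<forall>n. f n \<in> D) \<and> (\<forall>e>0. \<exists>N. \<forall>m\<ge>N. \<forall>n\<ge>N. nd (\<lambda>j. f m j - f n j) < e)
          \<longrightarrow> (\<exists>a\<in>D. (\<lambda>n. nd (\<lambda>j. f n j - a j)) \<longlonglongrightarrow> 0))"

definition seq_basis :: "(nat \<Rightarrow> real) set \<Rightarrow> ((nat \<Rightarrow> real) \<Rightarrow> real) \<Rightarrow> bool" where
  "seq_basis D nd \<longleftrightarrow>
     (\<forall>n. unitv n \<in> D) \<and>
     (\<forall>a\<in>D. (\<lambda>N. nd (\<lambda>j. a j - psum a N j)) \<longlonglongrightarrow> 0) \<and>
     (\<forall>a\<in>D. \<forall>c. (\<lambda>N. nd (\<lambda>j. a j - psum c N j)) \<longlonglongrightarrow> 0 \<longrightarrow> c = a)"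

definition dual_rep :: "(nat \<Rightarrow> real) set \<Rightarrow> ((nat \<Rightarrow> real) \<Rightarrow> real) \<Rightarrow> (nat \<Rightarrow> real)
                        \<Rightarrow> ((nat \<Rightarrow> real) \<Rightarrow> real) \<Rightarrow> bool" where
  "dual_rep D nd \<beta> b \<longleftrightarrow>
     (\<forall>a\<in>D. \<forall>a'\<in>D. b (\<lambda>j. a j + a' j) = b a + b a') \<and>
     (\<forall>c. \<forall>a\<in>D. b (\<lambda>j. c * a j) = c * b a) \<and>
     (\<exists>K. \<forall>a\<in>D. \<bar>b a\<bar> \<le> K * nd a) \<and>
     (\<forall>n. b (unitv n) = \<beta> n)"

(* \<beta> \<in> X_d^* (under the identification b \<mapsto> {b(\<epsilon>_n)}) *)
definition in_dual :: "(nat \<Rightarrow> real) set \<Rightarrow> ((nat \<Rightarrow> real) \<Rightarrow> real) \<Rightarrow> (nat \<Rightarrow> real) \<Rightarrow> bool" where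
  "in_dual D nd \<beta> \<longleftrightarrow> (\<exists>b. dual_rep D nd \<beta> b)"

definition dual_opnorm :: "(nat \<Rightarrow> real) set \<Rightarrow> ((nat \<Rightarrow> real) \<Rightarrow> real) \<Rightarrow> ((nat \<Rightarrow> real) \<Rightarrow> real) \<Rightarrow> real" where
  "dual_opnorm D nd b = Sup {\<bar>b a\<bar> | a. a \<in> D \<and> nd a \<le> 1}"

definition dual_norm :: "(nat \<Rightarrow> real) set \<Rightarrow> ((nat \<Rightarrow> real) \<Rightarrow> real) \<Rightarrow> (nat \<Rightarrow> real) \<Rightarrow> real" where
  "dual_norm D nd \<beta> = dual_opnorm D nd (SOME b. dual_rep D nd \<beta> b)"

definition dual_basis :: "(nat \<Rightarrow> real) set \<Rightarrow> ((nat \<Rightarrow> real) \<Rightarrow> real) \<Rightarrow> bool" where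
  "dual_basis D nd \<longleftrightarrow>
     (\<forall>n. in_dual D nd (unitv n)) \<and>
     (\<forall>\<beta>. in_dual D nd \<beta> \<longrightarrow> (\<lambda>N. dual_norm D nd (\<lambda>j. \<beta> j - psum \<beta> N j)) \<longlonglongrightarrow> 0)"

definition frame :: "(nat \<Rightarrow> real) set \<Rightarrow> ((nat \<Rightarrow> real) \<Rightarrow> real) \<Rightarrow> (nat \<Rightarrow> ('a::banach \<Rightarrow>\<^sub>L real)) \<Rightarrow> bool" where
  "frame D nd ys \<longleftrightarrow>
     (\<exists>A B. A > 0 \<and> B > 0 \<and>
        (\<forall>x. (\<lambda>n. blinfun_apply (ys n) x) \<in> D \<and>
             A * norm x \<le> nd (\<lambda>n. blinfun_apply (ys n) x) \<and>
             nd (\<lambda>n. blinfun_apply (ys n) x) \<le> B * norm x))"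

definition coframe :: "(nat \<Rightarrow> real) set \<Rightarrow> ((nat \<Rightarrow> real) \<Rightarrow> real) \<Rightarrow> (nat \<Rightarrow> 'a::banach) \<Rightarrow> bool" where
  "coframe D nd xs \<longleftrightarrow>
     (\<exists>A B. A > 0 \<and> B > 0 \<and>
        (\<forall>y::'a \<Rightarrow>\<^sub>L real. in_dual D nd (\<lambda>n. blinfun_apply y (xs n)) \<and>
             A * norm y \<le> dual_norm D nd (\<lambda>n. blinfun_apply y (xs n)) \<and>
             dual_norm D nd (\<lambda>n. blinfun_apply y (xs n)) \<le> B * norm y))"

definition cross_frame :: "(nat \<Rightarrow> real) set \<Rightarrow> ((nat \<Rightarrow> real) \<Rightarrow> real) \<Rightarrow> (nat \<Rightarrow> 'a::banach)
                           \<Rightarrow> (nat \<Rightarrow> ('a \<Rightarrow>\<^sub>L real)) \<Rightarrow> bool" where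
  "cross_frame D nd xs ys \<longleftrightarrow>
     coframe D nd xs \<and> frame D nd ys \<and>
     (\<forall>x. (\<lambda>n. blinfun_apply (ys n) x *\<^sub>R xs n) sums x) \<and>
     (\<forall>y. (\<lambda>n. blinfun_apply y (xs n) *\<^sub>R ys n) sums y)"

definition alt_dual_frame :: "(nat \<Rightarrow> real) set \<Rightarrow> ((nat \<Rightarrow> real) \<Rightarrow> real) \<Rightarrow> (nat \<Rightarrow> 'a::banach)
                              \<Rightarrow> (nat \<Rightarrow> ('a \<Rightarrow>\<^sub>L real)) \<Rightarrow> bool" where
  "alt_dual_frame D nd xs ws \<longleftrightarrow> cross_frame D nd xs ws"

definition equiv_seq :: "(nat \<Rightarrow> ('a::banach \<Rightarrow>\<^sub>L real)) \<Rightarrow> (nat \<Rightarrow> ('a \<Rightarrow>\<^sub>L real)) \<Rightarrow> bool" where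
  "equiv_seq ys ws \<longleftrightarrow>
     (\<exists>T S :: ('a \<Rightarrow>\<^sub>L real) \<Rightarrow>\<^sub>L ('a \<Rightarrow>\<^sub>L real).
        (\<forall>y. blinfun_apply S (blinfun_apply T y) = y \<and> blinfun_apply T (blinfun_apply S y) = y) \<and>
        (\<forall>n. blinfun_apply T (ys n) = ws n))"

end

theory Submission
  imports Defs
begin

definition sublin :: "('a::real_vector \<Rightarrow> real) \<Rightarrow> bool" where
  "sublin q \<longleftrightarrow> (\<forall>u v. q (u + v) \<le> q u + q v) \<and> (\<forall>c v. c \<ge> 0 \<longrightarrow> q (c *\<^sub>R v) = c * q v)"

lemma sublin_add: "sublin q \<Longrightarrow> q (u + v) \<le> q u + q v" by (simp add: sublin_def)
lemma sublin_scale: "sublin q \<Longrightarrow> c \<ge> 0 \<Longrightarrow> q (c *\<^sub>R v) = c * q v" by (simp add: sublin_def)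
lemma sublin_zero: "sublin q \<Longrightarrow> q 0 = 0"
  using sublin_scale[of q 0 0] by simp
lemma sublin_lower: "sublin q \<Longrightarrow> - q (- v) \<le> q v"
  using sublin_add[of q v "-v"] sublin_zero[of q] by simp

definition Rq :: "('a::real_vector \<Rightarrow> real) \<Rightarrow> 'a \<Rightarrow> 'a \<Rightarrow> real" where
  "Rq q a v = Inf ((\<lambda>t. q (v + t *\<^sub>R a) - t * q a) ` {0..})"

lemma Rq_term_lower:
  assumes "sublin q" "t \<ge> 0" shows "- q (- v) \<le> q (v + t *\<^sub>R a) - t * q a"
proof -
  have "q (t *\<^sub>R a) \<le> q (v + t *\<^sub>R a) + q (- v)"
    using sublin_add[OF assms(1), of "v + t *\<^sub>R a" "-v"] by simp
  then show ?thesis using sublin_scale[OF assms] by simp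
qed

lemma Rq_bdd: "sublin q \<Longrightarrow> bdd_below ((\<lambda>t. q (v + t *\<^sub>R a) - t * q a) ` {0..})"
  by (rule bdd_belowI2[where m="- q (- v)"]) (auto intro: Rq_term_lower)

lemma Rq_le: "sublin q \<Longrightarrow> t \<ge> 0 \<Longrightarrow> Rq q a v \<le> q (v + t *\<^sub>R a) - t * q a"
  unfolding Rq_def by (rule cInf_lower) (auto intro: Rq_bdd)

lemma Rq_ge: "(\<And>t. t \<ge> 0 \<Longrightarrow> m \<le> q (v + t *\<^sub>R a) - t * q a) \<Longrightarrow> m \<le> Rq q a v"
  unfolding Rq_def by (rule cInf_greatest) auto

lemma Rq_le_q: "sublin q \<Longrightarrow> Rq q a v \<le> q v"
  using Rq_le[of q 0 a v] by simp

lemma Rq_neg: "sublin q \<Longrightarrow> Rq q a (- a) \<le> - q a"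
  using Rq_le[of q 1 a "-a"] sublin_zero[of q] by simp

lemma Rq_sublin:
  assumes q: "sublin q" shows "sublin (Rq q a)"
  unfolding sublin_def
proof (intro conjI allI impI)
  fix u v
  have "Rq q a (u + v) - (q (v + t *\<^sub>R a) - t * q a) \<le> Rq q a u" if t: "t \<ge> 0" for t
  proof -
    have "Rq q a (u + v) - (q (v + t *\<^sub>R a) - t * q a) \<le> q (u + s *\<^sub>R a) - s * q a" if s: "s \<ge> 0" for s
    proof -
      have "Rq q a (u + v) \<le> q ((u + v) + (s + t) *\<^sub>R a) - (s + t) * q a"
        using Rq_le[OF q] s t by simp
      also have "q ((u + v) + (s + t) *\<^sub>R a) \<le> q (u + s *\<^sub>R a) + q (v + t *\<^sub>R a)"
        using sublin_add[OF q, of "u + s *\<^sub>R a" "v + t *\<^sub>R a"]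
        by (simp add: algebra_simps)
      finally show ?thesis by (simp add: algebra_simps)
    qed
    then show ?thesis by (rule Rq_ge)
  qed
  then have "Rq q a (u + v) - Rq q a u \<le> q (v + t *\<^sub>R a) - t * q a" if "t \<ge> 0" for t
    using that by force
  then have "Rq q a (u + v) - Rq q a u \<le> Rq q a v" by (rule Rq_ge)
  then show "Rq q a (u + v) \<le> Rq q a u + Rq q a v" by simp
next
  fix c :: real and v assume c: "c \<ge> 0"
  show "Rq q a (c *\<^sub>R v) = c * Rq q a v"
  proof (cases "c = 0")
    case True
    have "Rq q a 0 \<le> 0" using Rq_le_q[OF q, of a 0] sublin_zero[OF q] by simp
    moreover have "0 \<le> Rq q a 0"
      by (rule Rq_ge) (use Rq_term_lower[OF q, of _ 0 a] sublin_zero[OF q] in auto)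
    ultimately show ?thesis using True by simp
  next
    case False
    then have cp: "c > 0" using c by simp
    have 1: "Rq q a (c *\<^sub>R v) / c \<le> Rq q a v"
    proof (rule Rq_ge)
      fix s :: real assume s: "s \<ge> 0"
      have "Rq q a (c *\<^sub>R v) \<le> q (c *\<^sub>R v + (c * s) *\<^sub>R a) - (c * s) * q a"
        using Rq_le[OF q] s cp by simp
      also have "q (c *\<^sub>R v + (c * s) *\<^sub>R a) = c * q (v + s *\<^sub>R a)"
        using sublin_scale[OF q c, of "v + s *\<^sub>R a"] by (simp add: algebra_simps)
      finally show "Rq q a (c *\<^sub>R v) / c \<le> q (v + s *\<^sub>R a) - s * q a"
        using cp by (simp add: field_simps)
    qed
    have 2: "c * Rq q a v \<le> Rq q a (c *\<^sub>R v)"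
    proof (rule Rq_ge)
      fix t :: real assume t: "t \<ge> 0"
      have "Rq q a v \<le> q (v + (t / c) *\<^sub>R a) - (t / c) * q a"
        by (rule Rq_le[OF q]) (use t cp in simp)
      moreover have "q (c *\<^sub>R v + t *\<^sub>R a) = c * q (v + (t / c) *\<^sub>R a)"
        using sublin_scale[OF q c, of "v + (t / c) *\<^sub>R a"] cp by (simp add: algebra_simps)
      ultimately show "c * Rq q a v \<le> q (c *\<^sub>R v + t *\<^sub>R a) - t * q a"
        using cp by (simp add: field_simps)
    qed
    from 1 2 cp show ?thesis by (simp add: field_simps)
  qed
qed

lemma minimal_sublin_linear:
  assumes q: "sublin q" and qle: "\<And>v. q v \<le> q0 v"
    and mini: "\<And>r. sublin r \<Longrightarrow> (\<forall>v. r v \<le> q0 v) \<Longrightarrow> (\<forall>v. r v \<le> q v) \<Longrightarrow> r = q"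
  shows "linear q"
proof -
  have neg: "q (- a) = - q a" for a
  proof -
    have "Rq q a = q"
      by (rule mini) (use Rq_sublin[OF q] Rq_le_q[OF q] qle order_trans in blast)+
    then have "q (- a) \<le> - q a" using Rq_neg[OF q, of a] by simp
    moreover have "- q a \<le> q (- a)" using sublin_lower[OF q, of "-a"] by simp
    ultimately show ?thesis by simp
  qed
  have add: "q (u + v) = q u + q v" for u v
  proof -
    have "q (- (u + v)) \<le> q (- u) + q (- v)" using sublin_add[OF q, of "-u" "-v"] by simp
    then show ?thesis using sublin_add[OF q, of u v] neg[of "u+v"] neg[of u] neg[of v] by simp
  qed
  have sc: "q (c *\<^sub>R v) = c * q v" for c v
  proof (cases "c \<ge> 0")
    case True then show ?thesis by (rule sublin_scale[OF q])
  next
    case False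
    then have "q (c *\<^sub>R v) = q ((- c) *\<^sub>R (- v))" by simp
    also have "\<dots> = (- c) * q (- v)" using False by (intro sublin_scale[OF q]) simp
    finally show ?thesis using neg[of v] by simp
  qed
  show ?thesis by (rule linearI) (use add sc in auto)
qed

lemma chain_inf_sublin:
  assumes C: "C \<noteq> {}" "\<And>q. q \<in> C \<Longrightarrow> sublin q \<and> (\<forall>v. q v \<le> q0 v)"
    and ch: "\<And>q1 q2. q1 \<in> C \<Longrightarrow> q2 \<in> C \<Longrightarrow> (\<forall>v. q1 v \<le> q2 v) \<or> (\<forall>v. q2 v \<le> q1 v)"
  defines "g \<equiv> \<lambda>v. Inf ((\<lambda>q. q v) ` C)"
  shows "sublin g" "\<And>v. g v \<le> q0 v" "\<And>q v. q \<in> C \<Longrightarrow> g v \<le> q v"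
proof -
  have bdd: "bdd_below ((\<lambda>q. q v) ` C)" for v
    by (rule bdd_belowI2[where m="- q0 (- v)"])
       (use C(2) in \<open>force intro: order_trans[OF _ sublin_lower]\<close>)
  show low: "g v \<le> q v" if "q \<in> C" for q v
    unfolding g_def by (rule cInf_lower) (use that bdd in auto)
  have ge: "m \<le> g v" if "\<And>q. q \<in> C \<Longrightarrow> m \<le> q v" for m v
    unfolding g_def by (rule cInf_greatest) (use that C(1) in auto)
  obtain q1 where q1: "q1 \<in> C" using C(1) by blast
  show "g v \<le> q0 v" for v using low[OF q1, of v] C(2)[OF q1] by (meson order_trans)
  show "sublin g"
    unfolding sublin_def
  proof (intro conjI allI impI)
    fix u v
    have "g (u + v) - q2 v \<le> g u" if q2: "q2 \<in> C" for q2
    proof (rule ge)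
      fix q1 assume q1: "q1 \<in> C"
      obtain q where q: "q \<in> C" "\<forall>v. q v \<le> q1 v" "\<forall>v. q v \<le> q2 v"
        using ch[OF q1 q2] q1 q2 by (metis order_refl)
      have "g (u + v) \<le> q (u + v)" by (rule low[OF q(1)])
      also have "\<dots> \<le> q u + q v" using C(2)[OF q(1)] sublin_add by blast
      also have "\<dots> \<le> q1 u + q2 v" using q by (simp add: add_mono)
      finally show "g (u + v) - q2 v \<le> q1 u" by simp
    qed
    then have "g (u + v) - g u \<le> q2 v" if "q2 \<in> C" for q2 using that by force
    then have "g (u + v) - g u \<le> g v" by (rule ge)
    then show "g (u + v) \<le> g u + g v" by simp
  next
    fix c :: real and v assume c: "c \<ge> 0"
    show "g (c *\<^sub>R v) = c * g v"
    proof (cases "c = 0")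
      case True
      have "g 0 = 0"
      proof (rule antisym)
        show "g 0 \<le> 0" using low[OF q1, of 0] C(2)[OF q1] sublin_zero by force
        show "0 \<le> g 0" by (rule ge) (use C(2) sublin_zero in force)
      qed
      then show ?thesis using True by simp
    next
      case False
      then have cp: "c > 0" using c by simp
      have 1: "g (c *\<^sub>R v) / c \<le> g v"
      proof (rule ge)
        fix q assume q: "q \<in> C"
        have "g (c *\<^sub>R v) \<le> q (c *\<^sub>R v)" by (rule low[OF q])
        also have "\<dots> = c * q v" using C(2)[OF q] sublin_scale c by blast
        finally show "g (c *\<^sub>R v) / c \<le> q v" using cp by (simp add: field_simps)
      qed
      have 2: "c * g v \<le> g (c *\<^sub>R v)"
      proof (rule ge)
        fix q assume q: "q \<in> C"
        have "g v \<le> q v" by (rule low[OF q])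
        then have "c * g v \<le> c * q v" using c by (rule mult_left_mono)
        also have "\<dots> = q (c *\<^sub>R v)" using C(2)[OF q] sublin_scale c by metis
        finally show "c * g v \<le> q (c *\<^sub>R v)" .
      qed
      from 1 2 cp show ?thesis by (simp add: field_simps)
    qed
  qed
qed

lemma exists_minimal_sublin:
  assumes q0: "sublin q0"
  shows "\<exists>q. sublin q \<and> (\<forall>v. q v \<le> q0 v) \<and>
     (\<forall>r. sublin r \<longrightarrow> (\<forall>v. r v \<le> q0 v) \<longrightarrow> (\<forall>v. r v \<le> q v) \<longrightarrow> r = q)"
proof -
  define A where "A = {q. sublin q \<and> (\<forall>v. q v \<le> q0 v)}"
  define P where "P = (\<lambda>a b :: 'a \<Rightarrow> real. \<forall>v. b v \<le> a v)"
  have po: "partial_order_on A (relation_of P A)"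
    unfolding partial_order_on_def preorder_on_def refl_on_def trans_def antisym_def relation_of_def P_def
  proof (intro conjI allI impI ballI)
    show "{(a, b). (a, b) \<in> A \<times> A \<and> (\<forall>v. b v \<le> a v)} \<subseteq> A \<times> A" by blast
  next
    fix x assume "x \<in> A" then show "(x, x) \<in> {(a, b). (a, b) \<in> A \<times> A \<and> (\<forall>v. b v \<le> a v)}" by simp
  next
    fix x y z assume "(x, y) \<in> {(a, b). (a, b) \<in> A \<times> A \<and> (\<forall>v. b v \<le> a v)}"
      "(y, z) \<in> {(a, b). (a, b) \<in> A \<times> A \<and> (\<forall>v. b v \<le> a v)}"
    then show "(x, z) \<in> {(a, b). (a, b) \<in> A \<times> A \<and> (\<forall>v. b v \<le> a v)}"
      by (auto intro: order_trans)
  next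
    fix x y assume "(x, y) \<in> {(a, b). (a, b) \<in> A \<times> A \<and> (\<forall>v. b v \<le> a v)}"
      "(y, x) \<in> {(a, b). (a, b) \<in> A \<times> A \<and> (\<forall>v. b v \<le> a v)}"
    then show "x = y" by (auto simp: fun_eq_iff intro: antisym)
  qed
  have ch: "\<exists>u \<in> A. \<forall>a \<in> C. P a u" if "C \<in> Chains (relation_of P A)" for C
  proof (cases "C = {}")
    case True then show ?thesis using q0 unfolding A_def by auto
  next
    case False
    have C2: "\<And>a b. a \<in> C \<Longrightarrow> b \<in> C \<Longrightarrow> (a, b) \<in> relation_of P A \<or> (b, a) \<in> relation_of P A"
      using that unfolding Chains_def by simp
    have CA: "sublin q \<and> (\<forall>v. q v \<le> q0 v)" if "q \<in> C" for q
    proof -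
      have "(q, q) \<in> relation_of P A" using C2[OF that that] by simp
      then have "q \<in> A" unfolding relation_of_def by simp
      then show ?thesis unfolding A_def by simp
    qed
    have chh: "(\<forall>v. q1 v \<le> q2 v) \<or> (\<forall>v. q2 v \<le> q1 v)" if "q1 \<in> C" "q2 \<in> C" for q1 q2
    proof -
      have "(q1, q2) \<in> relation_of P A \<or> (q2, q1) \<in> relation_of P A" using C2[OF that] .
      then have "P q1 q2 \<or> P q2 q1" unfolding relation_of_def by auto
      then show ?thesis unfolding P_def by auto
    qed
    note r = chain_inf_sublin[OF False CA chh]
    show ?thesis
    proof (rule bexI[where x="\<lambda>v. Inf ((\<lambda>q. q v) ` C)"])
      have "sublin (\<lambda>v. Inf ((\<lambda>q. q v) ` C)) \<and> (\<forall>v. Inf ((\<lambda>q. q v) ` C) \<le> q0 v)"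
        using r(1) r(2) by blast
      then show "(\<lambda>v. Inf ((\<lambda>q. q v) ` C)) \<in> A" unfolding A_def mem_Collect_eq .
      show "\<forall>a\<in>C. P a (\<lambda>v. Inf ((\<lambda>q. q v) ` C))" unfolding P_def
        by (intro ballI allI, rule r(3))
    qed
  qed
  obtain m where m: "m \<in> A" "\<forall>a\<in>A. P m a \<longrightarrow> a = m"
    using predicate_Zorn[OF po ch] by blast
  show ?thesis
  proof (rule exI[where x=m], intro conjI allI impI)
    show "sublin m" "\<And>v. m v \<le> q0 v" using m(1) unfolding A_def by auto
    fix r assume "sublin r" "\<forall>v. r v \<le> q0 v" "\<forall>v. r v \<le> m v"
    then show "r = m" using m(2) unfolding A_def P_def by auto
  qed
qed

theorem hahn_banach_sublin:
  fixes p :: "'a::real_vector \<Rightarrow> real"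
  assumes p: "sublin p"
  shows "\<exists>f. linear f \<and> (\<forall>v. f v \<le> p v) \<and> f x0 = p x0"
proof -
  define q0 where "q0 = Rq p x0"
  have q0: "sublin q0" unfolding q0_def by (rule Rq_sublin[OF p])
  obtain q where q: "sublin q" "\<forall>v. q v \<le> q0 v"
    "\<forall>r. sublin r \<longrightarrow> (\<forall>v. r v \<le> q0 v) \<longrightarrow> (\<forall>v. r v \<le> q v) \<longrightarrow> r = q"
    using exists_minimal_sublin[OF q0] by blast
  have lin: "linear q" by (rule minimal_sublin_linear[of q q0, OF q(1)]) (use q in auto)
  have lep: "q v \<le> p v" for v using q(2) Rq_le_q[OF p, of x0 v] unfolding q0_def by (metis order_trans)
  have "q (- x0) \<le> - p x0" using q(2) Rq_neg[OF p, of x0] unfolding q0_def by (metis order_trans)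
  moreover have "q (- x0) = - q x0" using linear_neg[OF lin] by simp
  ultimately have "p x0 \<le> q x0" by simp
  then show ?thesis using lin lep by (intro exI[of _ q]) (auto intro: antisym)
qed

locale sq =
  fixes D :: "(nat \<Rightarrow> real) set" and nd :: "(nat \<Rightarrow> real) \<Rightarrow> real"
  assumes sp: "seq_space D nd" and sb: "seq_basis D nd" and db: "dual_basis D nd"
begin

lemma zeroD: "(\<lambda>j. 0) \<in> D" using sp by (simp add: seq_space_def)
lemma addD: "a \<in> D \<Longrightarrow> b \<in> D \<Longrightarrow> (\<lambda>j. a j + b j) \<in> D" using sp by (simp add: seq_space_def)
lemma scaleD: "a \<in> D \<Longrightarrow> (\<lambda>j. c * a j) \<in> D" using sp by (simp add: seq_space_def)
lemma nd_nonneg: "a \<in> D \<Longrightarrow> 0 \<le> nd a" using sp by (simp add: seq_space_def)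
lemma nd_eq0: "a \<in> D \<Longrightarrow> nd a = 0 \<longleftrightarrow> a = (\<lambda>j. 0)" using sp by (simp add: seq_space_def)
lemma nd_scale: "a \<in> D \<Longrightarrow> nd (\<lambda>j. c * a j) = \<bar>c\<bar> * nd a" using sp by (simp add: seq_space_def)
lemma nd_tri: "a \<in> D \<Longrightarrow> b \<in> D \<Longrightarrow> nd (\<lambda>j. a j + b j) \<le> nd a + nd b" using sp by (simp add: seq_space_def)
lemma nd_zero: "nd (\<lambda>j. 0) = 0" using nd_eq0[OF zeroD] by simp

lemma negD: "a \<in> D \<Longrightarrow> (\<lambda>j. - a j) \<in> D" using scaleD[of a "-1"] by simp
lemma subD: "a \<in> D \<Longrightarrow> b \<in> D \<Longrightarrow> (\<lambda>j. a j - b j) \<in> D"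
  using addD[OF _ negD[of b], of a] by simp
lemma nd_neg: "a \<in> D \<Longrightarrow> nd (\<lambda>j. - a j) = nd a" using nd_scale[of a "-1"] by simp
lemma nd_sub: "a \<in> D \<Longrightarrow> b \<in> D \<Longrightarrow> nd (\<lambda>j. a j - b j) \<le> nd a + nd b"
  using nd_tri[OF _ negD[of b], of a] nd_neg[of b] by simp

lemma unitvD: "unitv n \<in> D" using sb by (simp add: seq_basis_def)
lemma basis_conv: "a \<in> D \<Longrightarrow> (\<lambda>N. nd (\<lambda>j. a j - psum a N j)) \<longlonglongrightarrow> 0"
  using sb by (simp add: seq_basis_def)

lemma psum_0: "psum c 0 = (\<lambda>j. 0)" by (simp add: psum_def)
lemma psum_Suc: "psum c (Suc N) = (\<lambda>j. psum c N j + c N * unitv N j)" by (simp add: psum_def)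
lemma psumD: "psum c N \<in> D"
  by (induction N) (auto simp: psum_0 psum_Suc zeroD intro!: addD scaleD unitvD)

lemma unitv_sym: "unitv n m = unitv m n" by (simp add: unitv_def)

lemma rep_add: "dual_rep D nd \<beta> b \<Longrightarrow> a \<in> D \<Longrightarrow> a' \<in> D \<Longrightarrow> b (\<lambda>j. a j + a' j) = b a + b a'"
  by (simp add: dual_rep_def)
lemma rep_scale: "dual_rep D nd \<beta> b \<Longrightarrow> a \<in> D \<Longrightarrow> b (\<lambda>j. c * a j) = c * b a"
  by (simp add: dual_rep_def)
lemma rep_unit: "dual_rep D nd \<beta> b \<Longrightarrow> b (unitv n) = \<beta> n"
  by (simp add: dual_rep_def)
lemma rep_bound: "dual_rep D nd \<beta> b \<Longrightarrow> \<exists>K\<ge>0. \<forall>a\<in>D. \<bar>b a\<bar> \<le> K * nd a"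
proof -
  assume r: "dual_rep D nd \<beta> b"
  then obtain K where K: "\<forall>a\<in>D. \<bar>b a\<bar> \<le> K * nd a" by (auto simp: dual_rep_def)
  have "\<forall>a\<in>D. \<bar>b a\<bar> \<le> max K 0 * nd a"
    using K nd_nonneg by (metis max.cobounded1 mult_right_mono order_trans)
  then show ?thesis by (intro exI[of _ "max K 0"]) auto
qed
lemma rep_zero: "dual_rep D nd \<beta> b \<Longrightarrow> b (\<lambda>j. 0) = 0"
  using rep_scale[OF _ zeroD, of \<beta> b 0] by simp
lemma rep_sub: "dual_rep D nd \<beta> b \<Longrightarrow> a \<in> D \<Longrightarrow> a' \<in> D \<Longrightarrow> b (\<lambda>j. a j - a' j) = b a - b a'"
  using rep_add[OF _ _ negD[of a'], of \<beta> b a] rep_scale[of \<beta> b a' "-1"] by simp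
lemma rep_psum: "dual_rep D nd \<beta> b \<Longrightarrow> b (psum c N) = (\<Sum>n<N. c n * \<beta> n)"
proof (induction N)
  case 0 then show ?case by (simp add: psum_0 rep_zero)
next
  case (Suc N)
  have "b (psum c (Suc N)) = b (psum c N) + b (\<lambda>j. c N * unitv N j)"
    unfolding psum_Suc by (rule rep_add[OF Suc.prems psumD scaleD[OF unitvD]])
  also have "b (\<lambda>j. c N * unitv N j) = c N * \<beta> N"
    using rep_scale[OF Suc.prems unitvD] rep_unit[OF Suc.prems] by simp
  finally show ?case using Suc by simp
qed

lemma rep_sums: assumes r: "dual_rep D nd \<beta> b" and a: "a \<in> D"
  shows "(\<lambda>n. a n * \<beta> n) sums b a"
proof -
  obtain K where K: "K \<ge> 0" "\<forall>a\<in>D. \<bar>b a\<bar> \<le> K * nd a" using rep_bound[OF r] by blast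
  have le: "norm (b a - (\<Sum>n<N. a n * \<beta> n)) \<le> K * nd (\<lambda>j. a j - psum a N j)" for N
    using K(2) subD[OF a psumD] rep_sub[OF r a psumD] rep_psum[OF r] unfolding real_norm_def by metis
  have lim: "(\<lambda>N. K * nd (\<lambda>j. a j - psum a N j)) \<longlonglongrightarrow> 0"
    using tendsto_mult_right_zero[OF basis_conv[OF a]] by simp
  have ev: "eventually (\<lambda>N. norm (b a - (\<Sum>n<N. a n * \<beta> n)) \<le> K * nd (\<lambda>j. a j - psum a N j)) sequentially"
    using le by (rule always_eventually[OF allI])
  have "(\<lambda>N. b a - (\<Sum>n<N. a n * \<beta> n)) \<longlonglongrightarrow> 0"
    by (rule Lim_null_comparison[OF ev lim])
  then have "(\<lambda>N. (\<Sum>n<N. a n * \<beta> n)) \<longlonglongrightarrow> b a"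
    using tendsto_diff[OF tendsto_const[of "b a"], of "\<lambda>N. b a - (\<Sum>n<N. a n * \<beta> n)" 0] by simp
  then show ?thesis by (simp add: sums_def)
qed

lemma rep_unique: "dual_rep D nd \<beta> b \<Longrightarrow> dual_rep D nd \<beta> b' \<Longrightarrow> a \<in> D \<Longrightarrow> b a = b' a"
  using rep_sums sums_unique2 by blast

lemma opnorm_bdd: "dual_rep D nd \<beta> b \<Longrightarrow> bdd_above {\<bar>b a\<bar> | a. a \<in> D \<and> nd a \<le> 1}"
proof -
  assume r: "dual_rep D nd \<beta> b"
  obtain K where K: "K \<ge> 0" "\<forall>a\<in>D. \<bar>b a\<bar> \<le> K * nd a" using rep_bound[OF r] by blast
  show ?thesis
    by (rule bdd_aboveI[where M=K]) (use K in \<open>auto intro: order_trans mult_left_le\<close>)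
qed

lemma opnorm_nonneg: "dual_rep D nd \<beta> b \<Longrightarrow> 0 \<le> dual_opnorm D nd b"
proof -
  assume r: "dual_rep D nd \<beta> b"
  have "\<bar>b (\<lambda>j. 0)\<bar> \<in> {\<bar>b a\<bar> | a. a \<in> D \<and> nd a \<le> 1}" using zeroD nd_zero by force
  then have "\<bar>b (\<lambda>j. 0)\<bar> \<le> dual_opnorm D nd b"
    unfolding dual_opnorm_def by (rule cSup_upper[OF _ opnorm_bdd[OF r]])
  then show ?thesis by simp
qed

lemma opnorm_bound:
  assumes r: "dual_rep D nd \<beta> b" and a: "a \<in> D"
  shows "\<bar>b a\<bar> \<le> dual_opnorm D nd b * nd a"
proof -
  let ?S = "{\<bar>b a\<bar> | a. a \<in> D \<and> nd a \<le> 1}"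
  obtain K where K: "K \<ge> 0" "\<forall>a\<in>D. \<bar>b a\<bar> \<le> K * nd a" using rep_bound[OF r] by blast
  have bdd: "bdd_above ?S"
    by (rule bdd_aboveI[where M=K]) (use K in \<open>auto intro: order_trans mult_left_le\<close>)
  show ?thesis
  proof (cases "nd a = 0")
    case True
    then have "a = (\<lambda>j. 0)" using nd_eq0[OF a] by simp
    then show ?thesis using rep_zero[OF r] by (simp add: nd_zero)
  next
    case False
    then have pos: "nd a > 0" using nd_nonneg[OF a] by simp
    define a' where "a' = (\<lambda>j. (1 / nd a) * a j)"
    have a'D: "a' \<in> D" unfolding a'_def by (rule scaleD[OF a])
    have "nd a' = \<bar>1 / nd a\<bar> * nd a" unfolding a'_def by (rule nd_scale[OF a])
    then have "nd a' = 1" using pos by simp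
    then have "\<bar>b a'\<bar> \<in> ?S" using a'D by auto
    then have "\<bar>b a'\<bar> \<le> Sup ?S" by (rule cSup_upper[OF _ bdd])
    moreover have "b a' = (1 / nd a) * b a"
      unfolding a'_def by (rule rep_scale[OF r a])
    then have "\<bar>b a'\<bar> = \<bar>b a\<bar> / nd a" using pos by (simp add: abs_mult)
    ultimately show ?thesis using pos unfolding dual_opnorm_def by (simp add: field_simps)
  qed
qed

lemma dual_norm_rep: assumes r: "dual_rep D nd \<beta> b" shows "dual_norm D nd \<beta> = dual_opnorm D nd b"
proof -
  have r': "dual_rep D nd \<beta> (SOME b. dual_rep D nd \<beta> b)" using r by (rule someI[where P="dual_rep D nd \<beta>"])
  have "\<And>a. a \<in> D \<Longrightarrow> (SOME b. dual_rep D nd \<beta> b) a = b a" using rep_unique[OF r' r] .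
  then have "{\<bar>(SOME b. dual_rep D nd \<beta> b) a\<bar> | a. a \<in> D \<and> nd a \<le> 1} = {\<bar>b a\<bar> | a. a \<in> D \<and> nd a \<le> 1}"
    by (metis (no_types, lifting))
  then show ?thesis unfolding dual_norm_def dual_opnorm_def by simp
qed

lemma dual_norm_nonneg: "dual_rep D nd \<beta> b \<Longrightarrow> 0 \<le> dual_norm D nd \<beta>"
  using opnorm_nonneg dual_norm_rep by simp

lemma dual_norm_bound: "dual_rep D nd \<beta> b \<Longrightarrow> a \<in> D \<Longrightarrow> \<bar>b a\<bar> \<le> dual_norm D nd \<beta> * nd a"
  using opnorm_bound dual_norm_rep by simp

lemma coord_bound: "\<exists>K. \<forall>a\<in>D. \<bar>a n\<bar> \<le> K * nd a"
proof -
  have "in_dual D nd (unitv n)" using db by (simp add: dual_basis_def)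
  then obtain e where e: "dual_rep D nd (unitv n) e" by (auto simp: in_dual_def)
  obtain K where K: "\<forall>a\<in>D. \<bar>e a\<bar> \<le> K * nd a" using rep_bound[OF e] by blast
  have "e a = a n" if "a \<in> D" for a
  proof -
    have "(\<lambda>m. a m * unitv n m) = (\<lambda>m. if m = n then a m else 0)" by (auto simp: unitv_def)
    then have "(\<lambda>m. a m * unitv n m) sums a n" using sums_single[of n a] by simp
    then show ?thesis using rep_sums[OF e that] sums_unique2 by blast
  qed
  then show ?thesis using K by metis
qed

lemma rep_diff:
  assumes r: "dual_rep D nd \<beta> b"
  shows "dual_rep D nd (\<lambda>j. \<beta> j - psum \<beta> N j) (\<lambda>a. b a - (\<Sum>n<N. \<beta> n * a n))"
proof -
  obtain Kc where Kc: "\<And>n a. a \<in> D \<Longrightarrow> \<bar>a n\<bar> \<le> Kc n * nd a" using coord_bound by metis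
  obtain K where K: "K \<ge> 0" "\<forall>a\<in>D. \<bar>b a\<bar> \<le> K * nd a" using rep_bound[OF r] by blast
  have bnd: "\<bar>b a - (\<Sum>n<N. \<beta> n * a n)\<bar> \<le> (K + (\<Sum>n<N. \<bar>\<beta> n\<bar> * Kc n)) * nd a" if a: "a \<in> D" for a
  proof -
    have "\<bar>b a - (\<Sum>n<N. \<beta> n * a n)\<bar> \<le> \<bar>b a\<bar> + (\<Sum>n<N. \<bar>\<beta> n\<bar> * \<bar>a n\<bar>)"
      by (rule order_trans[OF abs_triangle_ineq4]) (auto intro: order_trans[OF sum_abs] simp: abs_mult)
    also have "\<dots> \<le> K * nd a + (\<Sum>n<N. \<bar>\<beta> n\<bar> * (Kc n * nd a))"
      using K a Kc[OF a] by (intro add_mono sum_mono mult_left_mono) auto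
    also have "\<dots> = (K + (\<Sum>n<N. \<bar>\<beta> n\<bar> * Kc n)) * nd a"
      by (simp add: algebra_simps sum_distrib_right sum_distrib_left mult.left_commute)
    finally show ?thesis .
  qed
  show ?thesis unfolding dual_rep_def
  proof (intro conjI ballI allI)
    fix a a' assume "a \<in> D" "a' \<in> D"
    then show "b (\<lambda>j. a j + a' j) - (\<Sum>n<N. \<beta> n * (a n + a' n)) =
       b a - (\<Sum>n<N. \<beta> n * a n) + (b a' - (\<Sum>n<N. \<beta> n * a' n))"
      using rep_add[OF r] by (simp add: algebra_simps sum.distrib)
  next
    fix c a assume "a \<in> D"
    then show "b (\<lambda>j. c * a j) - (\<Sum>n<N. \<beta> n * (c * a n)) = c * (b a - (\<Sum>n<N. \<beta> n * a n))"
      using rep_scale[OF r] by (simp add: algebra_simps sum_distrib_left)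
  next
    show "\<exists>K. \<forall>a\<in>D. \<bar>b a - (\<Sum>n<N. \<beta> n * a n)\<bar> \<le> K * nd a" using bnd by blast
  next
    fix m
    show "b (unitv m) - (\<Sum>n<N. \<beta> n * unitv m n) = \<beta> m - psum \<beta> N m"
      using rep_unit[OF r] by (simp add: psum_def unitv_sym)
  qed
qed

end

lemma sublin_norm: "sublin (norm :: 'a::real_normed_vector \<Rightarrow> real)"
  unfolding sublin_def by (auto simp: norm_triangle_ineq)

lemma norming:
  fixes x :: "'a::real_normed_vector"
  shows "\<exists>f::'a \<Rightarrow>\<^sub>L real. norm f \<le> 1 \<and> blinfun_apply f x = norm x"
proof -
  obtain f where f: "linear f" "\<And>v. f v \<le> norm v" "f x = norm x"
    using hahn_banach_sublin[OF sublin_norm, of x] by blast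
  have ab: "\<bar>f v\<bar> \<le> norm v" for v
    using f(2)[of v] f(2)[of "-v"] linear_neg[OF f(1), of v] by simp
  have bl: "bounded_linear f"
    by (rule bounded_linear_intro[where K=1])
       (use f(1) ab in \<open>auto simp: linear_add linear_scale\<close>)
  show ?thesis
    by (rule exI[of _ "Blinfun f"])
       (use bl ab f(3) in \<open>auto simp: bounded_linear_Blinfun_apply intro!: norm_blinfun_bound\<close>)
qed

lemma separating:
  fixes M :: "'a::real_normed_vector set"
  assumes M: "subspace M" "closed M" and z: "z \<notin> M"
  shows "\<exists>F::'a \<Rightarrow>\<^sub>L real. (\<forall>m\<in>M. blinfun_apply F m = 0) \<and> blinfun_apply F z \<noteq> 0"
proof -
  have M0: "0 \<in> M" using M(1) by (rule subspace_0)
  then have Mne: "M \<noteq> {}" by auto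
  have ge: "d \<le> infdist x M" if "\<And>m. m \<in> M \<Longrightarrow> d \<le> dist x m" for d x
    using Mne that by (simp add: infdist_notempty cINF_greatest)
  define p where "p = (\<lambda>v. infdist v M)"
  have sub: "sublin p" unfolding sublin_def p_def
  proof (intro conjI allI impI)
    fix u v
    have "infdist (u + v) M - dist v m2 \<le> infdist u M" if m2: "m2 \<in> M" for m2
    proof (rule ge)
      fix m1 assume m1: "m1 \<in> M"
      have "infdist (u + v) M \<le> dist (u + v) (m1 + m2)"
        by (rule infdist_le) (use M(1) m1 m2 in \<open>simp add: subspace_add\<close>)
      also have "\<dots> \<le> dist u m1 + dist v m2"
        unfolding dist_norm by (rule order_trans[OF _ norm_triangle_ineq]) (simp add: algebra_simps)
      finally show "infdist (u + v) M - dist v m2 \<le> dist u m1" by simp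
    qed
    then have "infdist (u + v) M - infdist u M \<le> dist v m2" if "m2 \<in> M" for m2
      using that by force
    then have "infdist (u + v) M - infdist u M \<le> infdist v M" by (rule ge)
    then show "infdist (u + v) M \<le> infdist u M + infdist v M" by simp
  next
    fix c :: real and v assume c: "c \<ge> 0"
    show "infdist (c *\<^sub>R v) M = c * infdist v M"
    proof (cases "c = 0")
      case True then show ?thesis using M0 by simp
    next
      case False
      then have cp: "c > 0" using c by simp
      have 1: "infdist (c *\<^sub>R v) M / c \<le> infdist v M"
      proof (rule ge)
        fix m assume m: "m \<in> M"
        have "infdist (c *\<^sub>R v) M \<le> dist (c *\<^sub>R v) (c *\<^sub>R m)"
          by (rule infdist_le) (use M(1) m in \<open>simp add: subspace_scale\<close>)
        also have "\<dots> = c * dist v m"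
          using cp by (simp add: dist_norm flip: scaleR_diff_right)
        finally show "infdist (c *\<^sub>R v) M / c \<le> dist v m" using cp by (simp add: field_simps)
      qed
      have 2: "c * infdist v M \<le> infdist (c *\<^sub>R v) M"
      proof (rule ge)
        fix m assume m: "m \<in> M"
        have "infdist v M \<le> dist v ((1/c) *\<^sub>R m)"
          by (rule infdist_le) (use M(1) m in \<open>simp add: subspace_scale\<close>)
        also have "\<dots> = dist (c *\<^sub>R v) m / c"
        proof -
          have "dist (c *\<^sub>R v) m = dist (c *\<^sub>R v) (c *\<^sub>R ((1/c) *\<^sub>R m))" using cp by simp
          also have "\<dots> = c * dist v ((1/c) *\<^sub>R m)"
            using cp by (simp only: dist_norm flip: scaleR_diff_right) simp
          finally show ?thesis using cp by simp
        qed
        finally show "c * infdist v M \<le> dist (c *\<^sub>R v) m" using cp by (simp add: field_simps)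
      qed
      from 1 2 cp show ?thesis by (simp add: field_simps)
    qed
  qed
  obtain f where f: "linear f" "\<And>v. f v \<le> p v" "f z = p z"
    using hahn_banach_sublin[OF sub, of z] by blast
  have pz: "p z > 0" unfolding p_def by (rule infdist_pos_not_in_closed[OF M(2) Mne z])
  have pn: "p v \<le> norm v" for v unfolding p_def using infdist_le[OF M0, of v] by simp
  have ab: "\<bar>f v\<bar> \<le> norm v" for v
    using f(2)[of v] f(2)[of "-v"] pn[of v] pn[of "-v"] linear_neg[OF f(1), of v] by simp
  have bl: "bounded_linear f"
    by (rule bounded_linear_intro[where K=1])
       (use f(1) ab in \<open>auto simp: linear_add linear_scale\<close>)
  have fm: "f m = 0" if m: "m \<in> M" for m
  proof -
    have "f m \<le> 0" using f(2)[of m] m unfolding p_def by simp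
    moreover have "f (- m) \<le> 0" using f(2)[of "-m"] subspace_neg[OF M(1) m] unfolding p_def by simp
    ultimately show ?thesis using linear_neg[OF f(1), of m] by simp
  qed
  show ?thesis
    by (rule exI[of _ "Blinfun f"]) (use bl fm f(3) pz in \<open>auto simp: bounded_linear_Blinfun_apply\<close>)
qed

locale fr = sq D nd for D nd +
  fixes xs :: "nat \<Rightarrow> 'a::banach" and ys :: "nat \<Rightarrow> ('a \<Rightarrow>\<^sub>L real)"
  assumes cof: "coframe D nd xs" and frm: "frame D nd ys"
begin

lemma UD: "(\<lambda>n. blinfun_apply (ys n) x) \<in> D" using frm by (auto simp: frame_def)

lemma frame_AB: "\<exists>A B. A > 0 \<and> B > 0 \<and>
  (\<forall>x. A * norm x \<le> nd (\<lambda>n. blinfun_apply (ys n) x)) \<and>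
  (\<forall>x. nd (\<lambda>n. blinfun_apply (ys n) x) \<le> B * norm x)"
  using frm unfolding frame_def by blast

lemma cof_in: "in_dual D nd (\<lambda>n. blinfun_apply y (xs n))" using cof by (auto simp: coframe_def)

lemma cof_B: "\<exists>Bt. Bt > 0 \<and> (\<forall>y. dual_norm D nd (\<lambda>n. blinfun_apply y (xs n)) \<le> Bt * norm y)"
  using cof unfolding coframe_def by blast

lemma Lfun:
  assumes r: "dual_rep D nd \<gamma> c" and B: "\<And>x. nd (\<lambda>n. blinfun_apply (ys n) x) \<le> B * norm x"
  shows "bounded_linear (\<lambda>x. c (\<lambda>n. blinfun_apply (ys n) x))"
    "\<And>x. \<bar>c (\<lambda>n. blinfun_apply (ys n) x)\<bar> \<le> (dual_norm D nd \<gamma> * B) * norm x"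
proof -
  have bnd: "\<bar>c (\<lambda>n. blinfun_apply (ys n) x)\<bar> \<le> (dual_norm D nd \<gamma> * B) * norm x" for x
  proof -
    have "\<bar>c (\<lambda>n. blinfun_apply (ys n) x)\<bar> \<le> dual_norm D nd \<gamma> * nd (\<lambda>n. blinfun_apply (ys n) x)"
      by (rule dual_norm_bound[OF r UD])
    also have "\<dots> \<le> dual_norm D nd \<gamma> * (B * norm x)"
      by (rule mult_left_mono[OF B dual_norm_nonneg[OF r]])
    finally show ?thesis by simp
  qed
  then show "\<And>x. \<bar>c (\<lambda>n. blinfun_apply (ys n) x)\<bar> \<le> (dual_norm D nd \<gamma> * B) * norm x" .
  show "bounded_linear (\<lambda>x. c (\<lambda>n. blinfun_apply (ys n) x))"
  proof (rule bounded_linear_intro[where K="dual_norm D nd \<gamma> * B"])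
    fix x x'
    show "c (\<lambda>n. blinfun_apply (ys n) (x + x')) = c (\<lambda>n. blinfun_apply (ys n) x) + c (\<lambda>n. blinfun_apply (ys n) x')"
      using rep_add[OF r UD UD] by (simp add: blinfun.add_right)
  next
    fix r' :: real and x
    show "c (\<lambda>n. blinfun_apply (ys n) (r' *\<^sub>R x)) = r' *\<^sub>R c (\<lambda>n. blinfun_apply (ys n) x)"
      using rep_scale[OF r UD] by (simp add: blinfun.scaleR_right)
  next
    fix x show "norm (c (\<lambda>n. blinfun_apply (ys n) x)) \<le> norm x * (dual_norm D nd \<gamma> * B)"
      using bnd[of x] by (simp add: mult.commute)
  qed
qed

definition brep :: "('a \<Rightarrow>\<^sub>L real) \<Rightarrow> (nat \<Rightarrow> real) \<Rightarrow> real" where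
  "brep y = (SOME b. dual_rep D nd (\<lambda>n. blinfun_apply y (xs n)) b)"

lemma brep: "dual_rep D nd (\<lambda>n. blinfun_apply y (xs n)) (brep y)"
  using cof_in[of y] unfolding in_dual_def brep_def by (metis someI_ex)

definition Lb :: "('a \<Rightarrow>\<^sub>L real) \<Rightarrow> ('a \<Rightarrow>\<^sub>L real)" where
  "Lb y = Blinfun (\<lambda>x. brep y (\<lambda>n. blinfun_apply (ys n) x))"

lemma V_sums: "(\<lambda>n. blinfun_apply y (xs n) *\<^sub>R ys n) sums Lb y"
proof -
  obtain A B where AB: "A > 0" "B > 0"
    "\<forall>x. A * norm x \<le> nd (\<lambda>n. blinfun_apply (ys n) x)"
    "\<forall>x. nd (\<lambda>n. blinfun_apply (ys n) x) \<le> B * norm x" using frame_AB by blast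
  define \<beta> where "\<beta> = (\<lambda>n. blinfun_apply y (xs n))"
  have r: "dual_rep D nd \<beta> (brep y)" unfolding \<beta>_def by (rule brep)
  have bl: "bounded_linear (\<lambda>x. brep y (\<lambda>n. blinfun_apply (ys n) x))"
    by (rule Lfun(1)[OF r AB(4)[rule_format]])
  define P where "P = (\<lambda>N. \<Sum>n<N. \<beta> n *\<^sub>R ys n)"
  have est: "norm (P N - Lb y) \<le> dual_norm D nd (\<lambda>j. \<beta> j - psum \<beta> N j) * B" for N
  proof -
    note rN = rep_diff[OF r, of N]
    have ev: "blinfun_apply (Lb y - P N) x = brep y (\<lambda>n. blinfun_apply (ys n) x) - (\<Sum>n<N. \<beta> n * blinfun_apply (ys n) x)" for x
      unfolding Lb_def P_def using bl
      by (simp add: blinfun.diff_left blinfun.sum_left blinfun.scaleR_left bounded_linear_Blinfun_apply)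
    have "norm (Lb y - P N) \<le> dual_norm D nd (\<lambda>j. \<beta> j - psum \<beta> N j) * B"
    proof (rule norm_blinfun_bound)
      show "0 \<le> dual_norm D nd (\<lambda>j. \<beta> j - psum \<beta> N j) * B"
        using dual_norm_nonneg[OF rN] AB(2) by simp
      fix x
      show "norm (blinfun_apply (Lb y - P N) x) \<le> dual_norm D nd (\<lambda>j. \<beta> j - psum \<beta> N j) * B * norm x"
        unfolding ev real_norm_def by (rule Lfun(2)[OF rN AB(4)[rule_format]])
    qed
    then show ?thesis by (simp add: norm_minus_commute)
  qed
  have "(\<lambda>N. dual_norm D nd (\<lambda>j. \<beta> j - psum \<beta> N j)) \<longlonglongrightarrow> 0"
    using db cof_in[of y] unfolding dual_basis_def \<beta>_def by blast
  then have lim: "(\<lambda>N. dual_norm D nd (\<lambda>j. \<beta> j - psum \<beta> N j) * B) \<longlonglongrightarrow> 0"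
    using tendsto_mult_left_zero by blast
  have "(\<lambda>N. P N - Lb y) \<longlonglongrightarrow> 0"
    by (rule Lim_null_comparison[OF always_eventually[OF allI[OF est]] lim])
  then have "P \<longlonglongrightarrow> Lb y" by (simp add: LIM_zero_iff)
  then show ?thesis unfolding sums_def P_def \<beta>_def .
qed

lemma V_eq: "(\<Sum>n. blinfun_apply y (xs n) *\<^sub>R ys n) = Lb y"
  using V_sums sums_unique by metis

lemma Lb_bl: "bounded_linear Lb"
proof -
  obtain A B where AB: "A > 0" "B > 0"
    "\<forall>x. A * norm x \<le> nd (\<lambda>n. blinfun_apply (ys n) x)"
    "\<forall>x. nd (\<lambda>n. blinfun_apply (ys n) x) \<le> B * norm x" using frame_AB by blast
  obtain Bt where Bt: "Bt > 0" "\<forall>y. dual_norm D nd (\<lambda>n. blinfun_apply y (xs n)) \<le> Bt * norm y"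
    using cof_B by blast
  show ?thesis
  proof (rule bounded_linear_intro[where K="Bt * B"])
    fix y y'
    have "(\<lambda>n. blinfun_apply (y + y') (xs n) *\<^sub>R ys n) sums (Lb y + Lb y')"
      using sums_add[OF V_sums[of y] V_sums[of y']] by (simp add: blinfun.add_left scaleR_add_left)
    then show "Lb (y + y') = Lb y + Lb y'" using V_sums[of "y + y'"] sums_unique2 by blast
  next
    fix r :: real and y
    have "(\<lambda>n. blinfun_apply (r *\<^sub>R y) (xs n) *\<^sub>R ys n) sums (r *\<^sub>R Lb y)"
      using sums_scaleR_right[OF V_sums[of y], of r] by (simp add: blinfun.scaleR_left)
    then show "Lb (r *\<^sub>R y) = r *\<^sub>R Lb y" using V_sums[of "r *\<^sub>R y"] sums_unique2 by blast
  next
    fix y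
    have r: "dual_rep D nd (\<lambda>n. blinfun_apply y (xs n)) (brep y)" by (rule brep)
    have bl: "bounded_linear (\<lambda>x. brep y (\<lambda>n. blinfun_apply (ys n) x))"
      by (rule Lfun(1)[OF r AB(4)[rule_format]])
    have "norm (Lb y) \<le> dual_norm D nd (\<lambda>n. blinfun_apply y (xs n)) * B"
    proof (rule norm_blinfun_bound)
      show "0 \<le> dual_norm D nd (\<lambda>n. blinfun_apply y (xs n)) * B"
        using dual_norm_nonneg[OF r] AB(2) by simp
      fix x show "norm (blinfun_apply (Lb y) x) \<le> dual_norm D nd (\<lambda>n. blinfun_apply y (xs n)) * B * norm x"
        unfolding Lb_def bounded_linear_Blinfun_apply[OF bl] real_norm_def by (rule Lfun(2)[OF r AB(4)[rule_format]])
    qed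
    also have "\<dots> \<le> Bt * norm y * B" using Bt(2)[rule_format, of y] AB(2) by (simp add: mult_right_mono)
    finally show "norm (Lb y) \<le> norm y * (Bt * B)" by (simp add: algebra_simps)
  qed
qed

end

context fr
begin

lemma R_summable: assumes a: "a \<in> D" shows "summable (\<lambda>n. a n *\<^sub>R xs n)"
proof -
  obtain Bt where Bt: "Bt > 0" "\<forall>y. dual_norm D nd (\<lambda>n. blinfun_apply y (xs n)) \<le> Bt * norm y"
    using cof_B by blast
  define s where "s = (\<lambda>N. \<Sum>n<N. a n *\<^sub>R xs n)"
  define g where "g = (\<lambda>N. nd (\<lambda>j. a j - psum a N j))"
  have g: "g \<longlonglongrightarrow> 0" unfolding g_def by (rule basis_conv[OF a])
  have gnn: "0 \<le> g N" for N unfolding g_def by (rule nd_nonneg[OF subD[OF a psumD]])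
  have est: "norm (s m - s n) \<le> Bt * (g m + g n)" for m n
  proof -
    obtain f :: "'a \<Rightarrow>\<^sub>L real" where f: "norm f \<le> 1" "blinfun_apply f (s m - s n) = norm (s m - s n)"
      using norming by blast
    have r: "dual_rep D nd (\<lambda>k. blinfun_apply f (xs k)) (brep f)" by (rule brep)
    have ps: "blinfun_apply f (s N) = brep f a - brep f (\<lambda>j. a j - psum a N j)" for N
      using rep_sub[OF r a psumD[of a N]] rep_psum[OF r, where c=a and N=N]
      unfolding s_def by (simp add: blinfun.sum_right blinfun.scaleR_right)
    have b1: "\<bar>brep f (\<lambda>j. a j - psum a N j)\<bar> \<le> Bt * g N" for N
    proof -
      have "\<bar>brep f (\<lambda>j. a j - psum a N j)\<bar> \<le> dual_norm D nd (\<lambda>k. blinfun_apply f (xs k)) * g N"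
        unfolding g_def by (rule dual_norm_bound[OF r subD[OF a psumD]])
      also have "\<dots> \<le> (Bt * norm f) * g N"
        by (rule mult_right_mono[OF Bt(2)[rule_format] gnn])
      also have "\<dots> \<le> Bt * g N"
      proof -
        have "norm f * g N \<le> 1 * g N" by (rule mult_right_mono[OF f(1) gnn])
        then show ?thesis using Bt(1) by (simp add: mult.assoc mult_left_mono)
      qed
      finally show ?thesis .
    qed
    have "norm (s m - s n) = blinfun_apply f (s m) - blinfun_apply f (s n)"
      using f(2) by (simp add: blinfun.diff_right)
    also have "\<dots> = brep f (\<lambda>j. a j - psum a n j) - brep f (\<lambda>j. a j - psum a m j)"
      using ps[of m] ps[of n] by simp
    also have "\<dots> \<le> Bt * g m + Bt * g n" using b1[of m] b1[of n] by linarith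
    finally show ?thesis by (simp add: algebra_simps)
  qed
  have "Cauchy s"
  proof (rule CauchyI)
    fix e :: real assume e: "e > 0"
    have "e / (2 * Bt) > 0" using e Bt(1) by simp
    then obtain M where M: "\<forall>N\<ge>M. norm (g N - 0) < e / (2 * Bt)"
      using LIMSEQ_iff[THEN iffD1, OF g] by blast
    have "norm (s m - s n) < e" if "m \<ge> M" "n \<ge> M" for m n
    proof -
      have "g m < e / (2 * Bt)" "g n < e / (2 * Bt)" using M that gnn by auto
      then have "Bt * (g m + g n) < Bt * (e / (2 * Bt) + e / (2 * Bt))"
        using Bt(1) by (intro mult_strict_left_mono) auto
      also have "\<dots> = e" using Bt(1) by (simp add: field_simps)
      finally show ?thesis using est[of m n] by linarith
    qed
    then show "\<exists>M. \<forall>m\<ge>M. \<forall>n\<ge>M. norm (s m - s n) < e" by blast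
  qed
  then have "convergent s" by (simp add: Cauchy_convergent_iff)
  then show ?thesis unfolding summable_def sums_def convergent_def s_def .
qed

definition Sfun :: "'a \<Rightarrow> 'a" where
  "Sfun x = (\<Sum>n. blinfun_apply (ys n) x *\<^sub>R xs n)"

lemma S_sums: "(\<lambda>n. blinfun_apply (ys n) x *\<^sub>R xs n) sums Sfun x"
  unfolding Sfun_def using R_summable[OF UD] by (rule summable_sums)

lemma pair: "blinfun_apply y (Sfun x) = blinfun_apply (Lb y) x"
proof -
  have 1: "(\<lambda>n. blinfun_apply y (blinfun_apply (ys n) x *\<^sub>R xs n)) sums blinfun_apply y (Sfun x)"
    by (rule bounded_linear.sums[OF blinfun.bounded_linear_right S_sums])
  have 2: "(\<lambda>n. blinfun_apply (blinfun_apply y (xs n) *\<^sub>R ys n) x) sums blinfun_apply (Lb y) x"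
    by (rule bounded_linear.sums[OF blinfun.bounded_linear_left V_sums])
  show ?thesis using 1 2 by (simp add: blinfun.scaleR_right blinfun.scaleR_left mult.commute sums_unique2)
qed

lemma S_bl: "bounded_linear Sfun"
proof -
  obtain K where K: "K > 0" "\<forall>y. norm (Lb y) \<le> norm y * K" using bounded_linear.pos_bounded[OF Lb_bl] by blast
  show ?thesis
  proof (rule bounded_linear_intro[where K=K])
    fix x x'
    have "(\<lambda>n. blinfun_apply (ys n) (x + x') *\<^sub>R xs n) sums (Sfun x + Sfun x')"
      using sums_add[OF S_sums[of x] S_sums[of x']] by (simp add: blinfun.add_right scaleR_add_left)
    then show "Sfun (x + x') = Sfun x + Sfun x'" using S_sums[of "x + x'"] sums_unique2 by blast
  next
    fix r :: real and x
    have "(\<lambda>n. blinfun_apply (ys n) (r *\<^sub>R x) *\<^sub>R xs n) sums (r *\<^sub>R Sfun x)"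
      using sums_scaleR_right[OF S_sums[of x], of r] by (simp add: blinfun.scaleR_right)
    then show "Sfun (r *\<^sub>R x) = r *\<^sub>R Sfun x" using S_sums[of "r *\<^sub>R x"] sums_unique2 by blast
  next
    fix x
    obtain f :: "'a \<Rightarrow>\<^sub>L real" where f: "norm f \<le> 1" "blinfun_apply f (Sfun x) = norm (Sfun x)"
      using norming by blast
    have "norm (Sfun x) = blinfun_apply (Lb f) x" using f(2) pair by simp
    also have "\<dots> \<le> norm (Lb f) * norm x" using norm_blinfun[of "Lb f" x] by simp
    also have "\<dots> \<le> (norm f * K) * norm x" using K(2) by (simp add: mult_right_mono)
    also have "\<dots> \<le> K * norm x"
    proof -
      have "K \<ge> 0" using K(1) by simp
      then show ?thesis
        using f(1) by (intro mult_right_mono) (auto simp: mult_left_le_one_le)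
    qed
    finally show "norm (Sfun x) \<le> norm x * K" by (simp add: mult.commute)
  qed
qed

end

context fr
begin

lemma backward:
  fixes W :: "('a \<Rightarrow>\<^sub>L real) \<Rightarrow>\<^sub>L ('a \<Rightarrow>\<^sub>L real)"
  assumes W: "\<And>y. blinfun_apply W (Lb y) = y" "\<And>y. Lb (blinfun_apply W y) = y"
  shows "\<exists>ws. alt_dual_frame D nd xs ws \<and> equiv_seq ys ws"
proof -
  note Sl = S_bl
  have lin: "linear Sfun" by (rule bounded_linear.linear[OF Sl])
  have nW: "norm W + 1 > 0" using norm_ge_zero[of W] by linarith
  have lowb: "norm x \<le> norm W * norm (Sfun x)" for x
  proof -
    obtain f :: "'a \<Rightarrow>\<^sub>L real" where f: "norm f \<le> 1" "blinfun_apply f x = norm x"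
      using norming by blast
    have "norm x = blinfun_apply (Lb (blinfun_apply W f)) x" using f(2) W(2) by simp
    also have "\<dots> = blinfun_apply (blinfun_apply W f) (Sfun x)" by (simp add: pair)
    also have "\<dots> \<le> norm (blinfun_apply W f) * norm (Sfun x)"
      using norm_blinfun[of "blinfun_apply W f" "Sfun x"] by simp
    also have "\<dots> \<le> (norm W * norm f) * norm (Sfun x)"
      by (rule mult_right_mono[OF norm_blinfun norm_ge_zero])
    also have "\<dots> \<le> norm W * norm (Sfun x)"
    proof -
      have "norm W * norm f \<le> norm W * 1" by (rule mult_left_mono[OF f(1) norm_ge_zero])
      then show ?thesis by (simp add: mult_right_mono)
    qed
    finally show ?thesis .
  qed
  have closedR: "closed (range Sfun)"
    unfolding closed_sequential_limits
  proof (intro allI impI)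
    fix z l assume zl: "(\<forall>n. z n \<in> range Sfun) \<and> z \<longlonglongrightarrow> l"
    then have "\<forall>n. \<exists>v. z n = Sfun v" by blast
    then obtain u where u: "\<And>n. z n = Sfun (u n)" by metis
    have "Cauchy z" using zl LIMSEQ_imp_Cauchy by blast
    have "Cauchy u"
    proof (rule CauchyI)
      fix e :: real assume e: "e > 0"
      have "e / (norm W + 1) > 0" using e nW by simp
      then obtain M where M: "\<forall>m\<ge>M. \<forall>n\<ge>M. norm (z m - z n) < e / (norm W + 1)"
        using CauchyD[OF \<open>Cauchy z\<close>] by blast
      have "norm (u m - u n) < e" if "m \<ge> M" "n \<ge> M" for m n
      proof -
        have "norm (u m - u n) \<le> norm W * norm (z m - z n)"
          using lowb[of "u m - u n"] u by (simp add: linear_diff[OF lin])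
        also have "\<dots> \<le> (norm W + 1) * norm (z m - z n)" by (simp add: mult_right_mono)
        also have "\<dots> < (norm W + 1) * (e / (norm W + 1))"
          using M that nW by (intro mult_strict_left_mono) auto
        also have "\<dots> = e" using nW by simp
        finally show ?thesis .
      qed
      then show "\<exists>M. \<forall>m\<ge>M. \<forall>n\<ge>M. norm (u m - u n) < e" by blast
    qed
    then obtain u0 where u0: "u \<longlonglongrightarrow> u0" by (auto simp: Cauchy_convergent_iff convergent_def)
    have "(\<lambda>n. Sfun (u n)) \<longlonglongrightarrow> Sfun u0" by (rule bounded_linear.tendsto[OF Sl u0])
    moreover have "z = (\<lambda>n. Sfun (u n))" using u by (rule ext)
    ultimately have "z \<longlonglongrightarrow> Sfun u0" by simp
    then have "l = Sfun u0" using zl LIMSEQ_unique by blast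
    then show "l \<in> range Sfun" by simp
  qed
  have subR: "subspace (range Sfun)"
    unfolding subspace_def
  proof (intro conjI ballI allI)
    have "Sfun 0 = 0" by (rule linear_0[OF lin])
    then show "0 \<in> range Sfun" by (metis rangeI)
  next
    fix a b assume "a \<in> range Sfun" "b \<in> range Sfun"
    then obtain a' b' where "a = Sfun a'" "b = Sfun b'" by blast
    then have "a + b = Sfun (a' + b')" using linear_add[OF lin] by simp
    then show "a + b \<in> range Sfun" by simp
  next
    fix c :: real and a assume "a \<in> range Sfun"
    then obtain a' where "a = Sfun a'" by blast
    then have "c *\<^sub>R a = Sfun (c *\<^sub>R a')" using linear_scale[OF lin] by simp
    then show "c *\<^sub>R a \<in> range Sfun" by simp
  qed
  have surjS: "surj Sfun"
  proof (rule ccontr)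
    assume "\<not> surj Sfun"
    then obtain z where z: "z \<notin> range Sfun" by blast
    obtain F :: "'a \<Rightarrow>\<^sub>L real" where F: "\<forall>m\<in>range Sfun. blinfun_apply F m = 0" "blinfun_apply F z \<noteq> 0"
      using separating[OF subR closedR z] by blast
    have "Lb F = 0" by (rule blinfun_eqI) (use F(1) in \<open>simp add: pair[symmetric]\<close>)
    then have "F = 0" using W(1)[of F] by (simp add: blinfun.zero_right)
    then show False using F(2) by simp
  qed
  have injS: "inj Sfun"
  proof (rule injI)
    fix x x' assume "Sfun x = Sfun x'"
    then have "Sfun (x - x') = 0" by (simp add: linear_diff[OF lin])
    then have "norm (x - x') \<le> 0" using lowb[of "x - x'"] by simp
    then show "x = x'" by simp
  qed
  define Si where "Si = inv Sfun"
  have SSi: "Sfun (Si x) = x" for x unfolding Si_def by (rule surj_f_inv_f[OF surjS])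
  have Sinorm: "norm (Si x) \<le> norm W * norm x" for x using lowb[of "Si x"] SSi by simp
  obtain KS where KS: "KS > 0" "\<forall>x. norm (Sfun x) \<le> norm x * KS"
    using bounded_linear.pos_bounded[OF Sl] by blast
  obtain A B where AB: "A > 0" "B > 0"
    "\<forall>x. A * norm x \<le> nd (\<lambda>n. blinfun_apply (ys n) x)"
    "\<forall>x. nd (\<lambda>n. blinfun_apply (ys n) x) \<le> B * norm x" using frame_AB by blast
  define ws where "ws = (\<lambda>n. blinfun_apply W (ys n))"
  have wsx: "blinfun_apply (ws n) x = blinfun_apply (ys n) (Si x)" for n x
  proof -
    have "blinfun_apply (ws n) x = blinfun_apply (ws n) (Sfun (Si x))" by (simp add: SSi)
    also have "\<dots> = blinfun_apply (Lb (ws n)) (Si x)" by (rule pair)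
    also have "\<dots> = blinfun_apply (ys n) (Si x)" unfolding ws_def W(2) ..
    finally show ?thesis .
  qed
  have pos1: "A / KS > 0" using AB KS by simp
  have pos2: "B * (norm W + 1) > 0" using AB nW by simp
  have fx: "(\<lambda>n. blinfun_apply (ws n) x) \<in> D \<and> A / KS * norm x \<le> nd (\<lambda>n. blinfun_apply (ws n) x)
     \<and> nd (\<lambda>n. blinfun_apply (ws n) x) \<le> B * (norm W + 1) * norm x" for x
  proof (intro conjI)
    show "(\<lambda>n. blinfun_apply (ws n) x) \<in> D" unfolding wsx by (rule UD)
    have "norm (Sfun (Si x)) \<le> norm (Si x) * KS" using KS(2) by blast
    then have "norm x \<le> norm (Si x) * KS" by (simp only: SSi)
    then have "A / KS * norm x \<le> A * norm (Si x)" using AB(1) KS(1) by (simp add: field_simps)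
    also have "\<dots> \<le> nd (\<lambda>n. blinfun_apply (ys n) (Si x))" using AB(3) by blast
    finally show "A / KS * norm x \<le> nd (\<lambda>n. blinfun_apply (ws n) x)" unfolding wsx .
    have "nd (\<lambda>n. blinfun_apply (ys n) (Si x)) \<le> B * norm (Si x)" using AB(4) by blast
    also have "\<dots> \<le> B * (norm W * norm x)" using Sinorm AB(2) by (simp add: mult_left_mono)
    also have "\<dots> \<le> B * ((norm W + 1) * norm x)" using AB(2) by (simp add: mult_left_mono mult_right_mono)
    finally show "nd (\<lambda>n. blinfun_apply (ws n) x) \<le> B * (norm W + 1) * norm x" unfolding wsx by (simp add: mult.assoc)
  qed
  have frame_ws: "frame D nd ws"
    unfolding frame_def using pos1 pos2 fx by blast
  have xs_exp: "(\<lambda>n. blinfun_apply (ws n) x *\<^sub>R xs n) sums x" for x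
    using S_sums[of "Si x"] unfolding wsx SSi .
  have ys_exp: "(\<lambda>n. blinfun_apply y (xs n) *\<^sub>R ws n) sums y" for y
  proof -
    have "(\<lambda>n. blinfun_apply W (blinfun_apply y (xs n) *\<^sub>R ys n)) sums blinfun_apply W (Lb y)"
      by (rule bounded_linear.sums[OF blinfun.bounded_linear_right V_sums])
    then show ?thesis unfolding ws_def W(1) by (simp add: blinfun.scaleR_right)
  qed
  have "alt_dual_frame D nd xs ws"
    unfolding alt_dual_frame_def cross_frame_def
    by (intro conjI allI cof frame_ws xs_exp ys_exp)
  moreover have "equiv_seq ys ws"
    unfolding equiv_seq_def
    by (rule exI[of _ W], rule exI[of _ "Blinfun Lb"])
       (simp add: bounded_linear_Blinfun_apply[OF Lb_bl] W ws_def)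
  ultimately show ?thesis by blast
qed

end

lemma forward:
  fixes xs :: "nat \<Rightarrow> 'a::banach" and ys ws :: "nat \<Rightarrow> ('a \<Rightarrow>\<^sub>L real)"
  assumes alt: "alt_dual_frame D nd xs ws" and eq: "equiv_seq ys ws"
  shows "\<exists>W :: ('a \<Rightarrow>\<^sub>L real) \<Rightarrow>\<^sub>L ('a \<Rightarrow>\<^sub>L real).
     \<forall>y. blinfun_apply W (\<Sum>n. blinfun_apply y (xs n) *\<^sub>R ys n) = y \<and>
         (\<Sum>n. blinfun_apply (blinfun_apply W y) (xs n) *\<^sub>R ys n) = y"
proof -
  obtain T S :: "('a \<Rightarrow>\<^sub>L real) \<Rightarrow>\<^sub>L ('a \<Rightarrow>\<^sub>L real)" where
    TS: "\<And>y. blinfun_apply S (blinfun_apply T y) = y" "\<And>y. blinfun_apply T (blinfun_apply S y) = y"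
    and Tys: "\<And>n. blinfun_apply T (ys n) = ws n"
    using eq unfolding equiv_seq_def by blast
  have ys_exp: "(\<lambda>n. blinfun_apply y (xs n) *\<^sub>R ws n) sums y" for y
    using alt unfolding alt_dual_frame_def cross_frame_def by blast
  have V: "(\<Sum>n. blinfun_apply y (xs n) *\<^sub>R ys n) = blinfun_apply S y" for y
  proof -
    have "(\<lambda>n. blinfun_apply S (blinfun_apply y (xs n) *\<^sub>R ws n)) sums blinfun_apply S y"
      by (rule bounded_linear.sums[OF blinfun.bounded_linear_right ys_exp])
    then have "(\<lambda>n. blinfun_apply y (xs n) *\<^sub>R ys n) sums blinfun_apply S y"
      by (simp add: blinfun.scaleR_right Tys[symmetric] TS)
    then show ?thesis by (rule sums_unique[symmetric])
  qed
  show ?thesis by (rule exI[of _ T]) (simp add: V TS)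
qed

theorem theorem7:
  fixes D :: "(nat \<Rightarrow> real) set" and nd :: "(nat \<Rightarrow> real) \<Rightarrow> real"
    and xs :: "nat \<Rightarrow> 'a::banach" and ys :: "nat \<Rightarrow> ('a \<Rightarrow>\<^sub>L real)"
  assumes "seq_space D nd" and "seq_basis D nd" and "dual_basis D nd"
    and "coframe D nd xs" and "frame D nd ys"
  shows "(\<exists>ws. alt_dual_frame D nd xs ws \<and> equiv_seq ys ws) \<longleftrightarrow>
         (let V = (\<lambda>y::'a \<Rightarrow>\<^sub>L real. \<Sum>n. blinfun_apply y (xs n) *\<^sub>R ys n) in
            (\<exists>W :: ('a \<Rightarrow>\<^sub>L real) \<Rightarrow>\<^sub>L ('a \<Rightarrow>\<^sub>L real).
               \<forall>y. blinfun_apply W (V y) = y \<and> V (blinfun_apply W y) = y))"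
proof -
  interpret L: fr D nd xs ys using assms by unfold_locales
  show ?thesis
    unfolding Let_def
  proof
    assume "\<exists>ws. alt_dual_frame D nd xs ws \<and> equiv_seq ys ws"
    then show "\<exists>W :: ('a \<Rightarrow>\<^sub>L real) \<Rightarrow>\<^sub>L ('a \<Rightarrow>\<^sub>L real).
       \<forall>y. blinfun_apply W (\<Sum>n. blinfun_apply y (xs n) *\<^sub>R ys n) = y \<and>
           (\<Sum>n. blinfun_apply (blinfun_apply W y) (xs n) *\<^sub>R ys n) = y"
      using forward by blast
  next
    assume "\<exists>W :: ('a \<Rightarrow>\<^sub>L real) \<Rightarrow>\<^sub>L ('a \<Rightarrow>\<^sub>L real).
       \<forall>y. blinfun_apply W (\<Sum>n. blinfun_apply y (xs n) *\<^sub>R ys n) = y \<and>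
           (\<Sum>n. blinfun_apply (blinfun_apply W y) (xs n) *\<^sub>R ys n) = y"
    then obtain W :: "('a \<Rightarrow>\<^sub>L real) \<Rightarrow>\<^sub>L ('a \<Rightarrow>\<^sub>L real)" where
      W: "\<forall>y. blinfun_apply W (L.Lb y) = y \<and> L.Lb (blinfun_apply W y) = y"
      by (auto simp: L.V_eq)
    show "\<exists>ws. alt_dual_frame D nd xs ws \<and> equiv_seq ys ws"
      by (rule L.backward[of W]) (use W in auto)
  qed
qed

end
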